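(* Let $a\in\omega\setminus\{0\}$ and $h(n)=2^{(a^n)}$. Then $\mathfrak d(\neq^*,h)\le\mathfrak d(1/a)$ and $\mathfrak b(\neq^*,h)\ge\mathfrak b(1/a)$.
   Context: For bit sequences $x,y\in{}^\omega2$, $x\leftrightarrow y=\{n:x(n)=y(n)\}$; for $Z\subseteq\omega$, $\underline\rho(Z)=\liminf_n|Z\cap[0,n)|/n$. $\mathfrak d(p)$ is the least cardinality of $G\subseteq{}^\omega2$ such that for every $x\in{}^\omega2$ some $y\in G$ has $\underline\rho(x\leftrightarrow y)>p$; $\mathfrak b(p)$ is the least cardinality of $F\subseteq{}^\omega2$ such that for every $y\in{}^\omega2$ some $x\in F$ has $\underline\rho(x\leftrightarrow y)\le p$. A function $y$ is $h$-bounded if $y(n)<h(n)$ for all $n$. $\mathfrak d(\neq^*,h)$ is the least cardinality of a set $G$ of $h$-bounded functions such that for every $x\in{}^\omega\omega$ some $y\in G$ satisfies $x(n)\ne y(n)$ for all but finitely many $n$; $\mathfrak b(\neq^*,h)$ is the least cardinality of $F\subseteq{}^\omega\omega$ such that for every $h$-bounded $y$ some $x\in F$ satisfies $x(n)=y(n)$ for infinitely many $n$. *)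

theory Defs
  imports Complex_Main "HOL-Library.Extended_Real"
begin

text \<open>Bit sequences are functions nat => bool (so x(n) in {False,True} = 2).\<close>

definition agree :: "(nat \<Rightarrow> 'b) \<Rightarrow> (nat \<Rightarrow> 'b) \<Rightarrow> nat set" where
  "agree x y = {n. x n = y n}"

definition lower_density :: "nat set \<Rightarrow> ereal" where
  "lower_density Z = liminf (\<lambda>n. ereal (real (card (Z \<inter> {..<n})) / real n))"

definition d_family :: "real \<Rightarrow> (nat \<Rightarrow> bool) set \<Rightarrow> bool" where
  "d_family p G \<longleftrightarrow> (\<forall>x. \<exists>y\<in>G. lower_density (agree x y) > ereal p)"

definition b_family :: "real \<Rightarrow> (nat \<Rightarrow> bool) set \<Rightarrow> bool" where
  "b_family p F \<longleftrightarrow> (\<forall>y. \<exists>x\<in>F. lower_density (agree x y) \<le> ereal p)"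

definition h_bounded :: "(nat \<Rightarrow> nat) \<Rightarrow> (nat \<Rightarrow> nat) \<Rightarrow> bool" where
  "h_bounded h y \<longleftrightarrow> (\<forall>n. y n < h n)"

definition d_neq_family :: "(nat \<Rightarrow> nat) \<Rightarrow> (nat \<Rightarrow> nat) set \<Rightarrow> bool" where
  "d_neq_family h G \<longleftrightarrow> (\<forall>y\<in>G. h_bounded h y) \<and>
     (\<forall>x::nat \<Rightarrow> nat. \<exists>y\<in>G. \<forall>\<^sub>F n in sequentially. x n \<noteq> y n)"

definition b_neq_family :: "(nat \<Rightarrow> nat) \<Rightarrow> (nat \<Rightarrow> nat) set \<Rightarrow> bool" where
  "b_neq_family h F \<longleftrightarrow>
     (\<forall>y. h_bounded h y \<longrightarrow> (\<exists>x\<in>F. \<exists>\<^sub>F n in sequentially. x n = y n))"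

end

theory Submission
  imports Defs
begin

definition sS :: "nat \<Rightarrow> nat \<Rightarrow> nat" where
  "sS a n = (\<Sum>k<n. a^k)"

definition blk :: "nat \<Rightarrow> nat \<Rightarrow> nat" where
  "blk a m = (LEAST n. m < sS a (Suc n))"

definition enc :: "nat \<Rightarrow> (nat \<Rightarrow> bool) \<Rightarrow> nat \<Rightarrow> nat" where
  "enc a g n = horner_sum of_bool 2 (map (\<lambda>i. g (sS a n + i)) [0..<a^n])"

definition dec :: "nat \<Rightarrow> (nat \<Rightarrow> nat) \<Rightarrow> nat \<Rightarrow> bool" where
  "dec a x m = (\<not> bit (x (blk a m)) (m - sS a (blk a m)))"

lemma sS_Suc: "sS a (Suc n) = sS a n + a^n"
  by (simp add: sS_def)

lemma sS_mono: assumes "a \<noteq> 0" "k \<le> n" shows "sS a k \<le> sS a n"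
  unfolding sS_def by (rule sum_mono2) (use assms in auto)

lemma sS_ge: assumes "a \<noteq> 0" shows "n \<le> sS a n"
proof (induction n)
  case (Suc n)
  have "a^n \<ge> 1" using assms by simp
  then show ?case using Suc by (simp add: sS_Suc)
qed simp

lemma sS_ratio: "a * sS a n \<le> sS a n + a^n"
proof (induction n)
  case (Suc n)
  then show ?case by (simp add: sS_Suc algebra_simps)
qed (simp add: sS_def)

lemma blk_eq: assumes "a \<noteq> 0" "i < a^n" shows "blk a (sS a n + i) = n"
  unfolding blk_def
proof (rule Least_equality)
  show "sS a n + i < sS a (Suc n)" using assms by (simp add: sS_Suc)
next
  fix k assume "sS a n + i < sS a (Suc k)"
  then show "n \<le> k" using sS_mono[OF assms(1), of "Suc k" n] by (cases "Suc k \<le> n") auto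
qed

lemma enc_bound: "enc a g n < 2 ^ (a ^ n)"
  unfolding enc_def using horner_sum_of_bool_2_less[of "map (\<lambda>i. g (sS a n + i)) [0..<a^n]"]
  by simp

lemma enc_bit: assumes "i < a^n" shows "bit (enc a g n) i = g (sS a n + i)"
  unfolding enc_def using assms by (simp add: bit_horner_sum_bit_iff)

lemma key:
  assumes a: "a \<noteq> 0" and fr: "\<exists>\<^sub>F n in sequentially. enc a g n = x n"
  shows "lower_density (agree (dec a x) g) \<le> ereal (1 / real a)"
proof -
  let ?f = "\<lambda>n. ereal (real (card (agree (dec a x) g \<inter> {..<n})) / real n)"
  have pt: "?f (sS a (Suc n)) \<le> ereal (1 / real a)" if e: "enc a g n = x n" for n
  proof -
    have sub: "agree (dec a x) g \<inter> {..<sS a (Suc n)} \<subseteq> {..<sS a n}"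
    proof
      fix m assume m: "m \<in> agree (dec a x) g \<inter> {..<sS a (Suc n)}"
      show "m \<in> {..<sS a n}"
      proof (rule ccontr)
        assume "m \<notin> {..<sS a n}"
        then obtain i where mi: "m = sS a n + i" by (metis lessThan_iff not_less le_Suc_ex)
        with m have i: "i < a^n" by (simp add: sS_Suc)
        have "dec a x m = (\<not> g (sS a n + i))"
          unfolding dec_def mi blk_eq[OF a i] using enc_bit[OF i, of g] e by simp
        with m mi show False by (simp add: agree_def)
      qed
    qed
    have c: "card (agree (dec a x) g \<inter> {..<sS a (Suc n)}) \<le> sS a n"
      using card_mono[OF _ sub] by simp
    have pos: "sS a (Suc n) > 0" using sS_ge[OF a, of "Suc n"] by simp
    have r: "real a * real (sS a n) \<le> real (sS a (Suc n))"
      using sS_ratio[of a n] by (simp add: sS_Suc flip: of_nat_mult of_nat_add)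
    have "real (card (agree (dec a x) g \<inter> {..<sS a (Suc n)})) / real (sS a (Suc n))
          \<le> real (sS a n) / real (sS a (Suc n))"
      using c pos by (simp add: divide_right_mono)
    also have "\<dots> \<le> 1 / real a"
      using r pos a by (simp add: divide_simps mult.commute)
    finally show ?thesis by simp
  qed
  have "(INF m\<in>{N..}. ?f m) \<le> ereal (1 / real a)" for N
  proof -
    obtain n where n: "n \<ge> N" "enc a g n = x n"
      using fr unfolding frequently_sequentially by blast
    have "N \<le> sS a (Suc n)" using sS_ge[OF a, of "Suc n"] n by simp
    then show ?thesis using pt[OF n(2)] by (intro INF_lower2[of "sS a (Suc n)"]) auto
  qed
  then show ?thesis unfolding lower_density_def liminf_SUP_INF by (intro SUP_least) auto
qed

theorem mainTheorem8:
  fixes a :: nat and h :: "nat \<Rightarrow> nat"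
  assumes "a \<noteq> 0"
    and "\<And>n. h n = 2 ^ (a ^ n)"
  shows "(\<forall>G. d_family (1 / real a) G \<longrightarrow>
            (\<exists>G'. d_neq_family h G' \<and> ordLeq2 (card_of G') (card_of G)))
       \<and> (\<forall>F. b_neq_family h F \<longrightarrow>
            (\<exists>F'. b_family (1 / real a) F' \<and> ordLeq2 (card_of F') (card_of F)))"
proof (intro conjI allI impI)
  fix G assume G: "d_family (1 / real a) G"
  have "d_neq_family h (enc a ` G)"
    unfolding d_neq_family_def h_bounded_def
  proof (intro conjI ballI allI)
    fix y n assume "y \<in> enc a ` G"
    then show "y n < h n" using enc_bound assms(2) by auto
  next
    fix x :: "nat \<Rightarrow> nat"
    obtain g where g: "g \<in> G" "lower_density (agree (dec a x) g) > ereal (1 / real a)"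
      using G unfolding d_family_def by blast
    have "\<not> (\<exists>\<^sub>F n in sequentially. enc a g n = x n)"
      using key[OF assms(1)] g(2) by force
    then have "\<forall>\<^sub>F n in sequentially. x n \<noteq> enc a g n"
      by (simp add: not_frequently eq_commute)
    then show "\<exists>y\<in>enc a ` G. \<forall>\<^sub>F n in sequentially. x n \<noteq> y n" using g(1) by blast
  qed
  then show "\<exists>G'. d_neq_family h G' \<and> ordLeq2 (card_of G') (card_of G)"
    using card_of_image by blast
next
  fix F assume F: "b_neq_family h F"
  have "b_family (1 / real a) (dec a ` F)"
    unfolding b_family_def
  proof
    fix y
    have "h_bounded h (enc a y)" unfolding h_bounded_def using enc_bound assms(2) by auto
    then obtain x where x: "x \<in> F" "\<exists>\<^sub>F n in sequentially. x n = enc a y n"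
      using F unfolding b_neq_family_def by blast
    then have "\<exists>\<^sub>F n in sequentially. enc a y n = x n" by (simp add: eq_commute)
    then show "\<exists>x\<in>dec a ` F. lower_density (agree x y) \<le> ereal (1 / real a)"
      using key[OF assms(1)] x(1) by blast
  qed
  then show "\<exists>F'. b_family (1 / real a) F' \<and> ordLeq2 (card_of F') (card_of F)"
    using card_of_image by blast
qed

end
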